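(* Let $n\in\mathbb{N}$, $A_1,\dots,A_n\in\mathscr{Q}$ and $\mathcal{A}=\{A_1,\dots,A_n\}$. Then for every $P_1\in\mathrm{Posi}(\mathcal{A})$ there exists $P_2\in\mathrm{Posi}'(A_1,\dots,A_n)$ with $P_2\subseteq P_1$.
   Context: Let $\mathcal{X}$ be a nonempty set and let $\mathscr{V}$ be the real vector space of all functions $u:\mathcal{X}\to\mathbb{R}$, with pointwise operations. Let $\mathscr{Q}$ be the set of all finite subsets of $\mathscr{V}$ (including $\emptyset$). For a positive integer $n$, $\mathbb{R}^{n,+}=\{\boldsymbol\lambda\in\mathbb{R}^n:\lambda_j\ge0\ \forall j,\ \sum_j\lambda_j>0\}$, and for $\boldsymbol\lambda\in\mathbb{R}^n$, $\mathbf u=(u_1,\dots,u_n)\in\mathscr{V}^n$, $\boldsymbol\lambda\mathbf u=\sum_{j=1}^n\lambda_ju_j$. $\mathbb{N}$ denotes the positive integers. For $\mathcal{A}\subseteq\mathscr{Q}$: $\mathrm{Posi}(\mathcal{A})=\{\{\boldsymbol\lambda(\mathbf u)\mathbf u:\mathbf u\in\times_{k=1}^mB_k\}: m\in\mathbb{N},\ B_1,\dots,B_m\in\mathcal A,\ \boldsymbol\lambda:\times_{k=1}^mB_k\to\mathbb{R}^{m,+}\}$. For a finite sequence $A_1,\dots,A_n\in\mathscr{Q}$ ($n\in\mathbb{N}$): $\mathrm{Posi}'(A_1,\dots,A_n)=\{\{\boldsymbol\lambda(\mathbf u)\mathbf u:\mathbf u\in\times_{j=1}^nA_j\}:\ \boldsymbol\lambda:\times_{j=1}^nA_j\to\mathbb{R}^{n,+}\}$.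 *)

theory Defs
  imports "HOL-Analysis.Analysis"
begin

text \<open>A tuple
  u in B_1 x ... x B_m is a list in listset [B_1,...,B_m]. A coefficient map
  lambda assigns to each tuple a coefficient vector nat => real (only indices < m matter).\<close>

definition posi_coeffs :: "nat \<Rightarrow> (nat \<Rightarrow> real) \<Rightarrow> bool" where
  "posi_coeffs m l \<longleftrightarrow> (\<forall>j<m. 0 \<le> l j) \<and> (\<Sum>j<m. l j) > 0"

definition lin_comb :: "(nat \<Rightarrow> real) \<Rightarrow> ('x \<Rightarrow> real) list \<Rightarrow> ('x \<Rightarrow> real)" where
  "lin_comb l u = (\<lambda>x. \<Sum>j<length u. l j * (u ! j) x)"

definition posi_image :: "('x \<Rightarrow> real) set list \<Rightarrow> (('x \<Rightarrow> real) list \<Rightarrow> nat \<Rightarrow> real) \<Rightarrow> ('x \<Rightarrow> real) set" where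
  "posi_image Bs lam = {lin_comb (lam u) u | u. u \<in> listset Bs}"

definition Posi :: "('x \<Rightarrow> real) set set \<Rightarrow> ('x \<Rightarrow> real) set set" where
  "Posi \<A> = {posi_image Bs lam | Bs lam. Bs \<noteq> [] \<and> set Bs \<subseteq> \<A>
      \<and> (\<forall>u\<in>listset Bs. posi_coeffs (length Bs) (lam u))}"

definition Posi' :: "('x \<Rightarrow> real) set list \<Rightarrow> ('x \<Rightarrow> real) set set" where
  "Posi' As = {posi_image As lam | lam. \<forall>u\<in>listset As. posi_coeffs (length As) (lam u)}"

end

theory Submission
  imports Defs
begin

lemma listset_iff:
  "u \<in> listset As \<longleftrightarrow> length u = length As \<and> (\<forall>i<length As. u!i \<in> As!i)"
proof (induction As arbitrary: u)
  case Nil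
  then show ?case by auto
next
  case (Cons A As)
  show ?case
  proof (cases u)
    case Nil
    then show ?thesis by (auto simp: set_Cons_def)
  next
    case (Cons a w)
    have "u \<in> listset (A # As) \<longleftrightarrow> a \<in> A \<and> w \<in> listset As"
      using Cons by (auto simp: set_Cons_def)
    also have "\<dots> \<longleftrightarrow> length u = length (A#As) \<and> (\<forall>i<length (A#As). u!i \<in> (A#As)!i)"
      using Cons Cons.IH by (auto simp: less_Suc_eq_0_disj)
    finally show ?thesis .
  qed
qed

theorem mainTheorem18:
  fixes As :: "('x \<Rightarrow> real) set list" and P1 :: "('x \<Rightarrow> real) set"
  assumes "As \<noteq> []"
    and "\<forall>A\<in>set As. finite A"
    and "P1 \<in> Posi (set As)"
  shows "\<exists>P2\<in>Posi' As. P2 \<subseteq> P1"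
proof -
  obtain Bs lam where P1: "P1 = posi_image Bs lam" and sub: "set Bs \<subseteq> set As"
    and pos: "\<forall>u\<in>listset Bs. posi_coeffs (length Bs) (lam u)"
    using assms(3) unfolding Posi_def by blast
  define m where "m = length Bs"
  define n where "n = length As"
  define idx where "idx k = (SOME j. j < n \<and> As!j = Bs!k)" for k
  have idx: "idx k < n \<and> As!(idx k) = Bs!k" if "k < m" for k
  proof -
    have "Bs!k \<in> set As" using sub that m_def by auto
    then obtain j where "j < n" "As!j = Bs!k" by (auto simp: in_set_conv_nth n_def)
    then show ?thesis unfolding idx_def by (metis (mono_tags, lifting) someI)
  qed
  define v where "v u = map (\<lambda>k. u ! idx k) [0..<m]" for u :: "('x \<Rightarrow> real) list"
  define mu where "mu u j = (\<Sum>k\<in>{k. k < m \<and> idx k = j}. lam (v u) k)" for u j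
  have vin: "v u \<in> listset Bs" if "u \<in> listset As" for u
    using that idx by (auto simp: listset_iff v_def m_def n_def)
  have sumeq: "(\<Sum>j<n. mu u j * f j) = (\<Sum>k<m. lam (v u) k * f (idx k))" for u f
  proof -
    have "(\<Sum>j<n. mu u j * f j) = (\<Sum>j<n. \<Sum>k\<in>{k. k \<in> {..<m} \<and> idx k = j}. lam (v u) k * f (idx k))"
      unfolding mu_def sum_distrib_right by (intro sum.cong) auto
    also have "\<dots> = (\<Sum>k<m. lam (v u) k * f (idx k))"
      by (rule sum.group) (use idx in auto)
    finally show ?thesis .
  qed
  have "posi_image As mu \<in> Posi' As"
    unfolding Posi'_def
  proof (intro CollectI exI conjI ballI)
    fix u assume u: "u \<in> listset As"
    have pc: "posi_coeffs m (lam (v u))" using pos vin[OF u] m_def by auto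
    show "posi_coeffs (length As) (mu u)"
      unfolding posi_coeffs_def n_def[symmetric]
    proof
      show "\<forall>j<n. 0 \<le> mu u j" using pc unfolding posi_coeffs_def mu_def
        by (auto intro: sum_nonneg)
      have "(\<Sum>j<n. mu u j) = (\<Sum>j<n. mu u j * 1)" by simp
      also have "\<dots> = (\<Sum>k<m. lam (v u) k)" using sumeq[of u "\<lambda>_. 1"] by simp
      finally show "0 < (\<Sum>j<n. mu u j)" using pc unfolding posi_coeffs_def by simp
    qed
  qed simp
  moreover have "posi_image As mu \<subseteq> P1"
  proof
    fix p assume "p \<in> posi_image As mu"
    then obtain u where u: "u \<in> listset As" and p: "p = lin_comb (mu u) u"
      unfolding posi_image_def by blast
    have lu: "length u = n" using u by (simp add: listset_iff n_def)
    have "p = lin_comb (lam (v u)) (v u)"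
    proof
      fix x
      have "p x = (\<Sum>j<n. mu u j * (u!j) x)" using p lu by (simp add: lin_comb_def)
      also have "\<dots> = (\<Sum>k<m. lam (v u) k * (u ! idx k) x)" by (rule sumeq)
      also have "\<dots> = lin_comb (lam (v u)) (v u) x"
        unfolding lin_comb_def v_def by simp
      finally show "p x = lin_comb (lam (v u)) (v u) x" .
    qed
    then show "p \<in> P1" using vin[OF u] unfolding P1 posi_image_def by blast
  qed
  ultimately show ?thesis by blast
qed

end
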